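(* Let $m<n$ be positive integers and let $x_{i,j}\in[-1,1]$ for $i\in[m]$, $j\in[n]$. Then for any $a\in\mathbb{R}^m$ there exists a subset $S\subseteq[n]$ with $|S|\le m$ such that \[\Big|\sum_{i=1}^m a_i\prod_{j\in S}x_{i,j}\Big|\ge\frac{1}{4^m}\left(\frac1n\right)^{m(m+1)}\Big|\sum_{i=1}^m a_i\prod_{j=1}^n x_{i,j}\Big|.\]
   Context: An empty product equals $1$. *)

theory Defs
  imports Complex_Main
begin

end

theory Submission
  imports Defs
begin

lemma key:
  assumes "finite J"
  shows "\<And>I a x M. finite I \<Longrightarrow> (\<forall>i\<in>I. \<forall>j\<in>J. \<bar>x i j\<bar> \<le> (1::real)) \<Longrightarrow>
    (\<forall>S. S \<subseteq> J \<longrightarrow> card S \<le> card I \<longrightarrow> \<bar>\<Sum>i\<in>I. a i * (\<Prod>j\<in>S. x i j)\<bar> \<le> M) \<Longrightarrow>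
    \<bar>\<Sum>i\<in>I. a i * (\<Prod>j\<in>J. x i j)\<bar> \<le> (2 * real (card J) + 1) ^ card I * M"
  using assms
proof (induction J rule: finite_induct)
  case empty
  then show ?case by (metis card.empty empty_subsetI le0 mult_1 power_one prod.empty add_0 mult_zero_right of_nat_0)
next
  case (insert j J)
  have M0: "0 \<le> M" using insert.prems(3)[rule_format, of "{}"] by auto
  let ?f = "\<lambda>S. \<Sum>i\<in>I. a i * (\<Prod>j\<in>S. x i j)"
  show ?case
  proof (cases "card (insert j J) \<le> card I")
    case True
    have "\<bar>?f (insert j J)\<bar> \<le> M" using insert.prems(3) True by blast
    also have "M \<le> (2 * real (card (insert j J)) + 1) ^ card I * M"
      using M0 by (simp add: mult_le_cancel_right1 one_le_power)
    finally show ?thesis .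
  next
    case False
    show ?thesis
    proof (cases "I = {}")
      case True
      then show ?thesis using M0 by simp
    next
      case Ine: False
      then obtain r where r: "r \<in> I" by blast
      define m where "m = card I"
      have m1: "m \<ge> 1" using Ine insert.prems(1) m_def by (simp add: Suc_le_eq card_gt_0_iff)
      define b where "b = 2 * real (card J) + 1"
      have b0: "b \<ge> 0" unfolding b_def by simp
      have cardins: "card (insert j J) = card J + 1" using insert by simp
      have xr: "\<bar>x r j\<bar> \<le> 1" using insert.prems(2) r by auto
      define a' where "a' = (\<lambda>i. a i * (x i j - x r j))"
      have split: "?f (insert j J) = x r j * ?f J + (\<Sum>i\<in>I - {r}. a' i * (\<Prod>j\<in>J. x i j))"
      proof -
        have "(\<Sum>i\<in>I - {r}. a' i * (\<Prod>j\<in>J. x i j)) = (\<Sum>i\<in>I. a' i * (\<Prod>j\<in>J. x i j))"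
          using insert.prems(1) r by (intro sum.mono_neutral_left) (auto simp: a'_def)
        moreover have "?f (insert j J) = (\<Sum>i\<in>I. x r j * (a i * (\<Prod>j\<in>J. x i j)) + a' i * (\<Prod>j\<in>J. x i j))"
          using insert.hyps by (intro sum.cong) (auto simp: a'_def algebra_simps)
        ultimately show ?thesis by (simp add: sum.distrib sum_distrib_left)
      qed
      have IH1: "\<bar>?f J\<bar> \<le> b ^ m * M"
        unfolding b_def m_def
        by (rule insert.IH[OF insert.prems(1)]) (use insert.prems in auto)
      have IH2: "\<bar>\<Sum>i\<in>I - {r}. a' i * (\<Prod>j\<in>J. x i j)\<bar> \<le> b ^ (m - 1) * (2 * M)"
      proof -
        have "\<bar>\<Sum>i\<in>I - {r}. a' i * (\<Prod>j\<in>J. x i j)\<bar> \<le> b ^ card (I - {r}) * (2 * M)"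
          unfolding b_def
        proof (rule insert.IH)
          show "finite (I - {r})" using insert.prems(1) by simp
          show "\<forall>i\<in>I - {r}. \<forall>j\<in>J. \<bar>x i j\<bar> \<le> 1" using insert.prems(2) by auto
          show "\<forall>S\<subseteq>J. card S \<le> card (I - {r}) \<longrightarrow>
            \<bar>\<Sum>i\<in>I - {r}. a' i * (\<Prod>j\<in>S. x i j)\<bar> \<le> 2 * M"
          proof (intro allI impI)
            fix S assume S: "S \<subseteq> J" "card S \<le> card (I - {r})"
            have jS: "j \<notin> S" using S insert.hyps by auto
            have fS: "finite S" using S insert.hyps finite_subset by blast
            have c1: "card S \<le> card I" using S(2) card_Diff1_le[of I r] by linarith
            have c2: "card (insert j S) \<le> card I"
            proof -
              have "card (I - {r}) + 1 = card I"
                using r insert.prems(1) by (simp add: card_Diff_singleton card_gt_0_iff Ine)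
              moreover have "card (insert j S) = card S + 1" using jS fS by simp
              ultimately show ?thesis using S(2) by linarith
            qed
            have e1: "(\<Sum>i\<in>I - {r}. a' i * (\<Prod>j\<in>S. x i j)) = (\<Sum>i\<in>I. a' i * (\<Prod>j\<in>S. x i j))"
              using insert.prems(1) r by (intro sum.mono_neutral_left) (auto simp: a'_def)
            have e2: "(\<Sum>i\<in>I. a' i * (\<Prod>j\<in>S. x i j)) = ?f (insert j S) - x r j * ?f S"
              using jS fS by (simp add: a'_def sum_distrib_left sum_subtractf[symmetric] algebra_simps)
            have h1: "\<bar>?f (insert j S)\<bar> \<le> M" using insert.prems(3) c2 S(1) by blast
            have h2: "\<bar>?f S\<bar> \<le> M" using insert.prems(3) c1 S(1) by blast
            have "\<bar>x r j\<bar> * \<bar>?f S\<bar> \<le> 1 * M"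
              by (rule mult_mono) (use xr h2 in auto)
            then have "\<bar>x r j * ?f S\<bar> \<le> M" by (simp add: abs_mult)
            then show "\<bar>\<Sum>i\<in>I - {r}. a' i * (\<Prod>j\<in>S. x i j)\<bar> \<le> 2 * M"
              using e1 e2 h1 by linarith
          qed
        qed
        moreover have "card (I - {r}) = m - 1" using r insert.prems(1) m_def by simp
        ultimately show ?thesis by simp
      qed
      have "\<bar>?f (insert j J)\<bar> \<le> \<bar>x r j\<bar> * \<bar>?f J\<bar> + b ^ (m - 1) * (2 * M)"
      proof -
        have "\<bar>?f (insert j J)\<bar> \<le> \<bar>x r j * ?f J\<bar> + \<bar>\<Sum>i\<in>I - {r}. a' i * (\<Prod>j\<in>J. x i j)\<bar>"
          unfolding split by (rule abs_triangle_ineq)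
        then show ?thesis using IH2 unfolding abs_mult by linarith
      qed
      also have "\<dots> \<le> b ^ m * M + b ^ (m - 1) * (2 * M)"
      proof -
        have "\<bar>x r j\<bar> * \<bar>?f J\<bar> \<le> 1 * (b ^ m * M)"
          by (rule mult_mono) (use xr IH1 in auto)
        then show ?thesis by simp
      qed
      also have "\<dots> = b ^ (m - 1) * (b + 2) * M"
        using m1 by (cases m) (auto simp: algebra_simps)
      also have "\<dots> \<le> (b + 2) ^ (m - 1) * (b + 2) * M"
        using b0 M0 by (intro mult_right_mono power_mono) auto
      also have "\<dots> = (2 * real (card (insert j J)) + 1) ^ card I * M"
        using m1 cardins unfolding b_def m_def by (cases "card I") (auto simp: algebra_simps)
      finally show ?thesis .
    qed
  qed
qed

theorem lemma2:
  fixes m n :: nat and x :: "nat \<Rightarrow> nat \<Rightarrow> real" and a :: "nat \<Rightarrow> real"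
  assumes "0 < m" and "m < n"
    and "\<And>i j. i \<in> {1..m} \<Longrightarrow> j \<in> {1..n} \<Longrightarrow> x i j \<in> {-1..1}"
  shows "\<exists>S. S \<subseteq> {1..n} \<and> card S \<le> m \<and>
    \<bar>\<Sum>i=1..m. a i * (\<Prod>j\<in>S. x i j)\<bar> \<ge>
      (1 / 4 ^ m) * (1 / real n) ^ (m * (m + 1)) * \<bar>\<Sum>i=1..m. a i * (\<Prod>j=1..n. x i j)\<bar>"
proof -
  let ?f = "\<lambda>S. \<bar>\<Sum>i=1..m. a i * (\<Prod>j\<in>S. x i j)\<bar>"
  define F where "F = {S. S \<subseteq> {1..n} \<and> card S \<le> m}"
  have Ffin: "finite F" unfolding F_def by (rule finite_subset[of _ "Pow {1..n}"]) auto
  have Fne: "{} \<in> F" unfolding F_def by auto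
  define M where "M = Max (?f ` F)"
  have "M \<in> ?f ` F" unfolding M_def using Ffin Fne by (intro Max_in) auto
  then obtain S where S: "S \<in> F" "?f S = M" by auto
  have Mmax: "\<forall>T. T \<subseteq> {1..n} \<longrightarrow> card T \<le> card {1..m} \<longrightarrow> ?f T \<le> M"
    unfolding M_def using Ffin by (auto simp: F_def intro!: Max_ge)
  have bound: "?f {1..n} \<le> (2 * real (card {1..n}) + 1) ^ card {1..m} * M"
    by (rule key) (use assms(3) Mmax in \<open>auto simp: abs_le_iff\<close>)
  have n1: "real n \<ge> 1" using assms by simp
  have "2 * real n + 1 \<le> 4 * real n ^ (m + 1)"
  proof -
    have "real n \<le> real n ^ (m + 1)" using n1 by (simp add: power_increasing[of 1 "m+1" "real n", simplified])
    then show ?thesis using n1 by linarith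
  qed
  then have "(2 * real n + 1) ^ m \<le> (4 * real n ^ (m + 1)) ^ m"
    by (intro power_mono) auto
  also have "\<dots> = 4 ^ m * real n ^ (m * (m + 1))"
    by (simp add: power_mult_distrib power_add power_mult mult.commute)
  finally have pw: "(2 * real n + 1) ^ m \<le> 4 ^ m * real n ^ (m * (m + 1))" .
  have M0: "M \<ge> 0" using S by auto
  have "(1 / 4 ^ m) * (1 / real n) ^ (m * (m + 1)) * ?f {1..n}
      \<le> (1 / 4 ^ m) * (1 / real n) ^ (m * (m + 1)) * ((2 * real n + 1) ^ m * M)"
    using bound by (intro mult_left_mono) auto
  also have "\<dots> \<le> (1 / 4 ^ m) * (1 / real n) ^ (m * (m + 1)) * ((4 ^ m * real n ^ (m * (m + 1))) * M)"
    using pw M0 by (intro mult_left_mono mult_right_mono) auto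
  also have "\<dots> = M" using n1 by (simp add: power_one_over field_simps)
  finally show ?thesis using S unfolding F_def by auto
qed

end
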